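(* In the two-period model with a transparent bailout and $p_0<p_g<1-S$, suppose a short-lived stimulation equilibrium exists. Then in that equilibrium: (i) $\bar\theta_g<\bar\theta_m<p_g$; (ii) $\hat\theta<\theta_0<\hat\theta_g=p_g+S$; (iii) $p_g<2\theta_0-\mathbb{E}[\theta\mid\theta\le\theta_0]$.
   Context: Two-period model: a continuum of firms with privately known type $\theta\in[0,1]$, cdf $F$, density $f>0$, $f$ strictly log-concave, and for every $b\in(0,1]$ the map $a\mapsto 2\mathbb{E}[\theta\mid a<\theta<b]-\mathbb{E}[\theta\mid\theta\le a]$ is increasing on $(0,b)$. A type-$\theta$ firm holds one unit of an asset worth $\theta$ in each of two periods $t=1,2$. In each period it has a project with cost $I>0$ and net return $S>0$ that can be funded only by selling that period's unit; selling that unit at price $p\ge I$ yields $p+S$ for that period, not selling yields $\theta$. A firm's total payoff is the sum of the two periods' payoffs (period-2 payoff weighted by $\delta<1$, and equilibria are considered in the limit $\delta\to1$). In each period competitive short-lived risk-neutral buyers make price offers (Bertrand; break even in expectation; indifferent buyers buy). At $t=1$ only, the government offers to buy one unit at price $p_g$; each firm then sells its $t=1$ unit to the government, to the market, or not at all. Sales to the market at $t=1$ are not observed by $t=2$ buyers. Transparent bailout: acceptance of the government offer is observed by $t=2$ buyers, who may make different offers to bailout recipients and non-recipients. Equilibrium means perfect Bayesian equilibrium. Laissez-faire: $\theta_0\in(0,1)$ uniquely solves $\theta_0-S=\mathbb{E}[\theta\mid\theta\le\theta_0]$, $p_0:=\mathbb{E}[\theta\mid\theta\le\theta_0]$, and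 $p_0\ge I$. Equilibrium structure: every equilibrium has cutoffs $0<\hat\theta\le\hat\theta_g\le\theta_2$ such that types $\theta\le\hat\theta$ sell in both periods, types in $(\hat\theta,\hat\theta_g]$ sell only at $t=1$ to the government, types in $(\hat\theta_g,\theta_2]$ sell only at $t=2$, and types above $\theta_2$ never sell. Among types $\theta\le\hat\theta$, $\mu_g$ and $\mu_m=1-\mu_g$ denote the fractions selling at $t=1$ to the government and to the market, and $\bar\theta_g$, $\bar\theta_m$ the average asset values of these two groups. A short-lived stimulation equilibrium is an equilibrium with $\hat\theta_g=\theta_2$; a delayed stimulation equilibrium is one with $\hat\theta_g<\theta_2$. *)

theory Defs
  imports "HOL-Analysis.Analysis"
begin

text \<open>Type distribution: density f on [0,1] (the cdf F is the integral of f).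
  Conditional expectation of theta given a <= theta <= b (open/closed endpoints
  are immaterial for an atomless distribution).\<close>

definition cexp :: "(real \<Rightarrow> real) \<Rightarrow> real \<Rightarrow> real \<Rightarrow> real" where
  "cexp f a b = integral {a..b} (\<lambda>x. x * f x) / integral {a..b} f"

definition strictly_log_concave_on :: "real set \<Rightarrow> (real \<Rightarrow> real) \<Rightarrow> bool" where
  "strictly_log_concave_on A f \<longleftrightarrow>
     (\<forall>x\<in>A. \<forall>y\<in>A. \<forall>t. x \<noteq> y \<and> 0 < t \<and> t < 1 \<longrightarrow>
        ln (f ((1 - t) * x + t * y)) > (1 - t) * ln (f x) + t * ln (f y))"

text \<open>Payoff (in one period) of selling the unit of that period at price p:
  p + S if the project can be funded (p >= I), otherwise just p.\<close>

definition sale :: "real \<Rightarrow> real \<Rightarrow> real \<Rightarrow> real" where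
  "sale I S p = (if I \<le> p then p + S else p)"

section \<open>Plans of a firm (limit delta -> 1: undiscounted sum of both periods)\<close>

datatype t1choice = Gov | Mkt | NoSale

type_synonym plan = "t1choice \<times> bool"  \<comment> \<open>t=1 choice, sell at t=2?\<close>

definition plans :: "plan set" where
  "plans = {Gov, Mkt, NoSale} \<times> UNIV"

text \<open>Total payoff of type theta following a plan, given the government price pg,
  the t=1 market price p1, and the t=2 prices qg (bailout recipients) and qn
  (non-recipients): the transparent bailout lets t=2 buyers condition on
  acceptance of the government offer; t=1 market sales are not observed.\<close>

definition plan_pay ::
  "real \<Rightarrow> real \<Rightarrow> real \<Rightarrow> real \<Rightarrow> real \<Rightarrow> real \<Rightarrow> real \<Rightarrow> plan \<Rightarrow> real" where
  "plan_pay I S pg p1 qg qn \<theta> pl =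
     (case fst pl of Gov \<Rightarrow> sale I S pg | Mkt \<Rightarrow> sale I S p1 | NoSale \<Rightarrow> \<theta>)
     + (if snd pl then sale I S (if fst pl = Gov then qg else qn) else \<theta>)"

definition value_fn :: "real \<Rightarrow> real \<Rightarrow> real \<Rightarrow> real \<Rightarrow> real \<Rightarrow> real \<Rightarrow> real \<Rightarrow> real" where
  "value_fn I S pg p1 qg qn \<theta> = (MAX pl \<in> plans. plan_pay I S pg p1 qg qn \<theta> pl)"

definition strat ::
  "real \<Rightarrow> real \<Rightarrow> real \<Rightarrow> (real \<Rightarrow> real) \<Rightarrow> real \<Rightarrow> plan \<Rightarrow> real" where
  "strat th thg th2 sig \<theta> pl =
     (if \<theta> \<le> th then
        (if pl = (Gov, True) then sig \<theta> else if pl = (Mkt, True) then 1 - sig \<theta> else 0)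
      else if \<theta> \<le> thg then (if pl = (Gov, False) then 1 else 0)
      else if \<theta> \<le> th2 then (if pl = (NoSale, True) then 1 else 0)
      else (if pl = (NoSale, False) then 1 else 0))"

definition profit :: "(real \<Rightarrow> real) \<Rightarrow> (real \<Rightarrow> real) \<Rightarrow> real \<Rightarrow> real" where
  "profit f w q = integral {0..1} (\<lambda>\<theta>. w \<theta> * f \<theta> * (\<theta> - q))"

text \<open>Conditions: (1) cutoff structure, sig measurable with values in [0,1];
  (2) every type's plan(s) are optimal given the prices;
  (3) competitive (Bertrand) buyers in each market:
      equilibrium offers do not lose money, and no buyer can profitably deviate
      to another offer, where a deviating offer is accepted by exactly the types
      for which accepting it is strictly better than their equilibrium payoff
      (continuation play and t=2 beliefs unchanged, as t=1 market sales are unobserved).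
  t=2 market populations (Bayes' rule): recipients = types that sold to the government
  at t=1; non-recipients = all other types.\<close>

definition transparent_eq ::
  "real \<Rightarrow> real \<Rightarrow> real \<Rightarrow> (real \<Rightarrow> real) \<Rightarrow> real \<Rightarrow> real \<Rightarrow> real \<Rightarrow> (real \<Rightarrow> real)
    \<Rightarrow> real \<Rightarrow> real \<Rightarrow> real \<Rightarrow> bool" where
  "transparent_eq I S pg f th thg th2 sig p1 qg qn \<longleftrightarrow>
     (let \<pi> = strat th thg th2 sig;
          V = value_fn I S pg p1 qg qn;
          gov = (\<lambda>\<theta>. \<pi> \<theta> (Gov, True) + \<pi> \<theta> (Gov, False));
          mkt = (\<lambda>\<theta>. \<pi> \<theta> (Mkt, True) + \<pi> \<theta> (Mkt, False));
          nonrec = (\<lambda>\<theta>. 1 - gov \<theta>);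
          sellR = (\<lambda>\<theta>. \<pi> \<theta> (Gov, True));
          sellN = (\<lambda>\<theta>. \<pi> \<theta> (Mkt, True) + \<pi> \<theta> (NoSale, True))
      in 0 < th \<and> th \<le> thg \<and> thg \<le> th2 \<and> th2 \<le> 1
       \<and> sig \<in> borel_measurable borel
       \<and> (\<forall>\<theta>\<in>{0..th}. 0 \<le> sig \<theta> \<and> sig \<theta> \<le> 1)
       \<and> (\<forall>\<theta>\<in>{0..1}. \<forall>pl. 0 < \<pi> \<theta> pl \<longrightarrow> plan_pay I S pg p1 qg qn \<theta> pl = V \<theta>)
       \<and> profit f mkt p1 \<ge> 0
       \<and> (\<forall>p'. profit f (\<lambda>\<theta>. indicator {\<theta>. sale I S p' + max (sale I S qn) \<theta> > V \<theta>} \<theta>) p' \<le> 0)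
       \<and> profit f sellR qg \<ge> 0
       \<and> (\<forall>q'. profit f (\<lambda>\<theta>. gov \<theta> * indicator {\<theta>. sale I S q' > max (sale I S qg) \<theta>} \<theta>) q' \<le> 0)
       \<and> profit f sellN qn \<ge> 0
       \<and> (\<forall>q'. profit f (\<lambda>\<theta>. nonrec \<theta> * indicator {\<theta>. sale I S q' > max (sale I S qn) \<theta>} \<theta>) q' \<le> 0))"

text \<open>Average asset value of the types theta <= th selling at t=1 to the government
  (theta_bar_g) resp. to the market (theta_bar_m).\<close>

definition avg_gov :: "(real \<Rightarrow> real) \<Rightarrow> real \<Rightarrow> (real \<Rightarrow> real) \<Rightarrow> real" where
  "avg_gov f th sig = integral {0..th} (\<lambda>\<theta>. \<theta> * sig \<theta> * f \<theta>) / integral {0..th} (\<lambda>\<theta>. sig \<theta> * f \<theta>)"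

definition avg_mkt :: "(real \<Rightarrow> real) \<Rightarrow> real \<Rightarrow> (real \<Rightarrow> real) \<Rightarrow> real" where
  "avg_mkt f th sig = integral {0..th} (\<lambda>\<theta>. \<theta> * (1 - sig \<theta>) * f \<theta>) / integral {0..th} (\<lambda>\<theta>. (1 - sig \<theta>) * f \<theta>)"

end

theory Submission
  imports Defs
begin

lemma fbounds:
  fixes f :: "real \<Rightarrow> real"
  assumes f_pos: "\<forall>x\<in>{0..1}. f x > 0" and f_lc: "strictly_log_concave_on {0..1} f"
  shows "\<exists>m K. 0 < m \<and> (\<forall>x\<in>{0..1}. m \<le> f x \<and> f x \<le> K)"
proof -
  define m where "m = min (f 0) (f 1)"
  have m0: "0 < m" using f_pos by (simp add: m_def)
  have low: "m \<le> f x" if x: "x \<in> {0..1}" for x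
  proof (cases "x = 0 \<or> x = 1")
    case True then show ?thesis by (auto simp: m_def)
  next
    case False
    with x have x01: "0 < x" "x < 1" by auto
    have "ln (f ((1 - x) * 0 + x * 1)) > (1 - x) * ln (f 0) + x * ln (f 1)"
      using f_lc x01 unfolding strictly_log_concave_on_def
      by (elim ballE[of _ _ 0] ballE[of _ _ 1] allE[of _ x]) auto
    moreover have "ln m \<le> ln (f 0)" "ln m \<le> ln (f 1)" using m0 by (auto simp: m_def)
    moreover have "(1 - x) * ln m + x * ln m \<le> (1 - x) * ln (f 0) + x * ln (f 1)"
      using calculation(2,3) x01 by (intro add_mono mult_left_mono) auto
    ultimately have "ln m < ln (f x)" by (simp add: algebra_simps)
    then show ?thesis using m0 f_pos x by simp
  qed
  define K where "K = f (1/2)^2 / m"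
  have up: "f x \<le> K" if x: "x \<in> {0..1}" for x
  proof (cases "x = 1/2")
    case True
    have "m \<le> f (1/2)" using low by simp
    then have "f (1/2) * m \<le> f (1/2) * f (1/2)" using m0 by (intro mult_left_mono) auto
    then show ?thesis unfolding True using m0 by (simp add: K_def power2_eq_square field_simps)
  next
    case False
    have y: "1 - x \<in> {0..1}" using x by auto
    have "ln (f ((1 - 1/2) * x + 1/2 * (1 - x))) > (1 - 1/2) * ln (f x) + 1/2 * ln (f (1 - x))"
      using f_lc x y False unfolding strictly_log_concave_on_def
      by (elim ballE[of _ _ x] ballE[of _ _ "1-x"] allE[of _ "1/2"]) auto
    moreover have "(1 - 1/2) * x + 1/2 * (1 - x) = (1/2::real)" by (simp add: field_simps)
    ultimately have "(1 - 1/2) * ln (f x) + 1/2 * ln (f (1 - x)) < ln (f (1/2))" by metis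
    then have "ln (f x) + ln (f (1 - x)) < 2 * ln (f (1/2))" by simp
    moreover have p: "f x > 0" "f (1 - x) > 0" "f (1/2) > 0" using f_pos x y by auto
    ultimately have "ln (f x * f (1 - x)) < ln (f (1/2)^2)"
      by (simp add: ln_mult ln_realpow)
    then have lt: "f x * f (1 - x) < f (1/2)^2" using p by (subst (asm) ln_less_cancel_iff) auto
    have "f x * m \<le> f x * f (1 - x)" using low[OF y] p by (intro mult_left_mono) auto
    with lt m0 show ?thesis by (simp add: K_def field_simps)
  qed
  show ?thesis using m0 low up by blast
qed


lemma wint:
  fixes f W :: "real \<Rightarrow> real"
  assumes f_int: "f integrable_on {0..1}" and f_nn: "\<forall>x\<in>{0..1}. 0 \<le> f x"
    and ab: "0 \<le> a" "b \<le> 1" and W: "W \<in> borel_measurable borel" and B: "\<forall>x\<in>{a..b}. \<bar>W x\<bar> \<le> B"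
  shows "(\<lambda>x. W x * f x) integrable_on {a..b}"
proof -
  have sub: "{a..b} \<subseteq> {0..1}" using ab by auto
  have fi: "f integrable_on {a..b}" by (rule integrable_on_subinterval[OF f_int sub])
  have fa: "f absolutely_integrable_on {a..b}"
    by (rule nonnegative_absolutely_integrable_1[OF fi]) (use f_nn sub in auto)
  have Wm: "W \<in> borel_measurable (lebesgue_on {a..b})"
    using W by (intro measurable_restrict_space1 measurable_completion) (simp add: measurable_lborel1)
  have bd: "bounded (W ` {a..b})" using B by (auto simp: bounded_real)
  have "(\<lambda>x. W x * f x) absolutely_integrable_on {a..b}"
    by (rule absolutely_integrable_bounded_measurable_product_real[OF Wm _ bd fa]) auto
  then show ?thesis using set_lebesgue_integral_eq_integral(1) by blast
qed


lemma strict_avg: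
  fixes f W :: "real \<Rightarrow> real"
  assumes f_int: "f integrable_on {0..1}" and f_nn: "\<forall>x\<in>{0..1}. 0 \<le> f x"
    and fK: "\<forall>x\<in>{0..1}. f x \<le> K"
    and b: "0 < b" "b \<le> 1" and W: "W \<in> borel_measurable borel"
    and W01: "\<forall>x\<in>{0..b}. 0 \<le> W x \<and> W x \<le> 1"
    and pos: "integral {0..b} (\<lambda>x. W x * f x) > 0"
  shows "integral {0..b} (\<lambda>x. x * W x * f x) < b * integral {0..b} (\<lambda>x. W x * f x)"
proof -
  define K' where "K' = max K 1"
  have K'0: "K' > 0" by (simp add: K'_def)
  define IW where "IW = integral {0..b} (\<lambda>x. W x * f x)"
  define IT where "IT = integral {0..b} (\<lambda>x. x * W x * f x)"
  define e where "e = min b (IW / (2*K'))"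
  have IW0: "IW > 0" using pos by (simp add: IW_def)
  have e0: "e > 0" using b IW0 K'0 by (simp add: e_def)
  have eb: "e \<le> b" by (simp add: e_def)
  have eK: "K' * e \<le> IW / 2" using K'0 by (simp add: e_def field_simps min_def)
  have int1: "(\<lambda>x. W x * f x) integrable_on {0..b}"
  proof -
    have "\<forall>x\<in>{0..b}. \<bar>W x\<bar> \<le> 1" using W01 by auto
    then show ?thesis by (rule wint[OF f_int f_nn order.refl b(2) W])
  qed
  have Wm2: "(\<lambda>x. x * W x) \<in> borel_measurable borel" using W by measurable
  have int2: "(\<lambda>x. x * W x * f x) integrable_on {0..b}"
  proof (rule wint[OF f_int f_nn order.refl b(2) Wm2])
    show "\<forall>x\<in>{0..b}. \<bar>x * W x\<bar> \<le> 1"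
    proof
      fix x assume x: "x \<in> {0..b}"
      then have "0 \<le> x" "x \<le> 1" "0 \<le> W x" "W x \<le> 1" using W01 b by auto
      then show "\<bar>x * W x\<bar> \<le> 1" by (simp add: abs_mult mult_le_one)
    qed
  qed
  define ind where "ind = (\<lambda>x::real. if x \<in> {b - e..b} then K' else 0)"
  have inter: "{b - e..b} \<inter> {0..b} = {b - e..b}" using eb by auto
  have int3: "ind integrable_on {0..b}"
    unfolding ind_def integrable_restrict_Int inter by (rule integrable_const_ivl)
  have iind: "integral {0..b} ind = K' * e"
    unfolding ind_def integral_restrict_Int inter using e0 by simp
  have pw: "e * (W x * f x - ind x) \<le> (b - x) * (W x * f x)" if x: "x \<in> {0..b}" for x
  proof -
    have Wf: "0 \<le> W x * f x" "W x * f x \<le> K'"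
    proof -
      have "0 \<le> W x" "W x \<le> 1" "0 \<le> f x" "f x \<le> K" using W01 f_nn fK x b by auto
      then show "0 \<le> W x * f x" "W x * f x \<le> K'"
        by (auto simp: K'_def intro!: mult_nonneg_nonneg order_trans[OF mult_right_mono[of "W x" 1 "f x"]])
    qed
    show ?thesis
    proof (cases "x \<in> {b - e..b}")
      case True
      then have "e * (W x * f x - ind x) \<le> 0" using Wf e0 by (simp add: ind_def mult_nonneg_nonpos)
      moreover have "0 \<le> (b - x) * (W x * f x)" using Wf x by auto
      ultimately show ?thesis by linarith
    next
      case False
      then have "e \<le> b - x" using x by auto
      moreover have "ind x = 0" using False unfolding ind_def by auto
      ultimately show ?thesis using Wf by (simp add: mult_right_mono)
    qed
  qed
  have "integral {0..b} (\<lambda>x. e * (W x * f x - ind x)) \<le> integral {0..b} (\<lambda>x. (b - x) * (W x * f x))"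
    by (rule integral_le) (use int1 int3 int2 pw in \<open>auto intro!: integrable_diff integrable_on_mult_right simp: algebra_simps\<close>)
  moreover have "integral {0..b} (\<lambda>x. e * (W x * f x - ind x)) = e * (IW - K' * e)"
    using integral_diff[OF int1 int3] iind by (simp add: IW_def)
  moreover have "integral {0..b} (\<lambda>x. (b - x) * (W x * f x)) = b * IW - IT"
  proof -
    have "integral {0..b} (\<lambda>x. (b - x) * (W x * f x)) = integral {0..b} (\<lambda>x. b * (W x * f x) - x * W x * f x)"
      by (simp add: algebra_simps)
    also have "\<dots> = b * IW - IT"
      by (subst integral_diff) (use int1 int2 in \<open>auto intro: integrable_on_mult_right simp: IW_def IT_def\<close>)
    finally show ?thesis .
  qed
  moreover have "e * (IW - K' * e) > 0" using e0 eK IW0 by simp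
  ultimately show ?thesis unfolding IW_def IT_def by linarith
qed


lemma lc_ratio:
  fixes f :: "real \<Rightarrow> real"
  assumes f_pos: "\<forall>x\<in>{0..1}. f x > 0" and f_lc: "strictly_log_concave_on {0..1} f"
    and k: "0 < k" and uv: "0 \<le> u" "u \<le> v" "k + v \<le> 1"
  shows "f (k + v) * f u \<le> f (k + u) * f v"
proof (cases "u = v")
  case True then show ?thesis by simp
next
  case False
  with uv have uv': "u < v" by simp
  define L where "L = k + v - u"
  have L0: "L > 0" using k uv' by (simp add: L_def)
  define t where "t = (v - u) / L"
  have t01: "0 < t" "t < 1" using uv' k L0 by (auto simp: t_def L_def field_simps)
  have mem: "u \<in> {0..1}" "k + v \<in> {0..1}" "v \<in> {0..1}" "k + u \<in> {0..1}" using uv k uv' by auto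
  have ne: "u \<noteq> k + v" using k uv' by simp
  have tL: "t * L = v - u" using L0 by (simp add: t_def)
  have e1: "(1 - t) * u + t * (k + v) = v"
  proof -
    have "(1 - t) * u + t * (k + v) = u + t * L" by (simp add: L_def algebra_simps)
    then show ?thesis using tL by simp
  qed
  have e2: "(1 - (1 - t)) * u + (1 - t) * (k + v) = k + u"
  proof -
    have "(1 - (1 - t)) * u + (1 - t) * (k + v) = k + v - t * L" by (simp add: L_def algebra_simps)
    then show ?thesis using tL by simp
  qed
  have i1: "ln (f ((1 - t) * u + t * (k + v))) > (1 - t) * ln (f u) + t * ln (f (k + v))"
    using f_lc mem ne t01 unfolding strictly_log_concave_on_def
    by (elim ballE[of _ _ u] ballE[of _ _ "k+v"] allE[of _ t]) auto
  have i2: "ln (f ((1 - (1 - t)) * u + (1 - t) * (k + v))) > (1 - (1 - t)) * ln (f u) + (1 - t) * ln (f (k + v))"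
    using f_lc mem ne t01 unfolding strictly_log_concave_on_def
    by (elim ballE[of _ _ u] ballE[of _ _ "k+v"] allE[of _ "1 - t"]) auto
  have "ln (f v) + ln (f (k + u)) > ln (f u) + ln (f (k + v))"
    using i1 i2 unfolding e1 e2 by (simp add: algebra_simps)
  moreover have p: "f u > 0" "f v > 0" "f (k+u) > 0" "f (k+v) > 0" using f_pos mem by auto
  ultimately have "ln (f (k + v) * f u) < ln (f (k + u) * f v)" by (simp add: ln_mult algebra_simps)
  then have "f (k + v) * f u < f (k + u) * f v" using p by (subst (asm) ln_less_cancel_iff) auto
  then show ?thesis by simp
qed

lemma psi_mono:
  fixes f :: "real \<Rightarrow> real"
  assumes f_int: "f integrable_on {0..1}" and f_pos: "\<forall>x\<in>{0..1}. f x > 0"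
    and f_lc: "strictly_log_concave_on {0..1} f"
    and m0: "0 < m" and mlow: "\<forall>x\<in>{0..1}. m \<le> f x"
    and xy: "0 < x" "x < y" "y \<le> 1"
  shows "cexp f 0 y - cexp f 0 x < y - x"
proof -
  define k where "k = y - x"
  have k0: "k > 0" using xy by (simp add: k_def)
  have f_nn: "\<forall>x\<in>{0..1}. 0 \<le> f x" using f_pos by (auto intro: less_imp_le)
  define Fx where "Fx = integral {0..x} f"
  define Fy where "Fy = integral {0..y} f"
  define Tx where "Tx = integral {0..x} (\<lambda>t. t * f t)"
  define Ty where "Ty = integral {0..y} (\<lambda>t. t * f t)"
  have fint: "f integrable_on {0..b}" if "b \<le> 1" for b
    using integrable_on_subinterval[OF f_int] that by auto
  have tfint: "(\<lambda>t. t * f t) integrable_on {0..b}" if "b \<le> 1" for b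
  proof -
    have "\<forall>t\<in>{0..b}. \<bar>t\<bar> \<le> 1" using that by auto
    then show ?thesis using wint[OF f_int f_nn order.refl that, of "\<lambda>t. t"] by simp
  qed
  have Fpos: "integral {0..b} f \<ge> m * b" if "0 \<le> b" "b \<le> 1" for b
  proof -
    have "integral {0..b} (\<lambda>t. m) \<le> integral {0..b} f"
      by (rule integral_le) (use fint that mlow in auto)
    then show ?thesis using that by (simp add: mult.commute)
  qed
  have Fx0: "Fx > 0" using Fpos[of x] xy m0 unfolding Fx_def by (smt (verit) mult_pos_pos)
  have Fy0: "Fy > 0" using Fpos[of y] xy m0 unfolding Fy_def by (smt (verit) mult_pos_pos)
  define D where "D = {-k..x}"
  have shift: "((\<lambda>u. g (k + u)) has_integral integral {0..y} g) D" if "g integrable_on {0..y}" for g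
  proof -
    have "(g has_integral integral {0..y} g) {-k + k..x + k}"
      using that k0 by (simp add: k_def has_integral_integral[symmetric])
    then have "((g \<circ> (+) k) has_integral integral {0..y} g) {-k..x}"
      by (subst has_integral_shift_Icc_real)
    then show ?thesis by (simp add: D_def o_def)
  qed
  have Q1: "((\<lambda>u. f (k + u)) has_integral Fy) D" using shift[OF fint[OF xy(3)]] by (simp add: Fy_def)
  have Q2: "((\<lambda>u. (k + u) * f (k + u)) has_integral Ty) D"
    using shift[OF tfint[OF xy(3)]] by (simp add: Ty_def)
  have sub: "{0..x} \<subseteq> D" using k0 by (auto simp: D_def)
  have P1: "((\<lambda>u. if u \<in> {0..x} then f u else 0) has_integral Fx) D"
    unfolding has_integral_restrict[OF sub] Fx_def by (rule integrable_integral) (use fint xy in auto)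
  have P2: "((\<lambda>u. if u \<in> {0..x} then u * f u else 0) has_integral Tx) D"
    unfolding has_integral_restrict[OF sub] Tx_def by (rule integrable_integral) (use tfint xy in auto)
  define Q where "Q = (\<lambda>u. f (k + u) / Fy)"
  define P where "P = (\<lambda>u. (if u \<in> {0..x} then f u else 0) / Fx)"
  define B where "B = {u \<in> {0..x}. Q u > P u}"
  define c where "c = Sup (insert 0 B)"
  have bdd: "bdd_above (insert 0 B)" unfolding B_def using xy by (auto intro!: bdd_aboveI[of _ x])
  have c0: "0 \<le> c" unfolding c_def using bdd by (intro cSup_upper) simp_all
  have cx: "c \<le> x" unfolding c_def by (rule cSup_least) (use xy in \<open>auto simp: B_def\<close>)
  have Qpos: "Q u \<ge> m / Fy" if "u \<in> D" "u \<le> x" for u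
  proof -
    have "k + u \<in> {0..1}" using that xy by (auto simp: D_def k_def)
    then show ?thesis using mlow Fy0 by (simp add: Q_def divide_right_mono)
  qed
  have below: "Q u \<ge> P u" if u: "u \<in> {0..x}" "u < c" for u
  proof -
    obtain b where b: "b \<in> insert 0 B" "u < b" using less_cSup_iff[OF _ bdd] u unfolding c_def by auto
    then have bB: "b \<in> B" using u by auto
    then have b0x: "b \<in> {0..x}" and Qb: "Q b > P b" by (auto simp: B_def)
    have r: "f (k + b) * f u \<le> f (k + u) * f b"
      by (rule lc_ratio[OF f_pos f_lc k0]) (use u b b0x xy in \<open>auto simp: k_def\<close>)
    have fb: "f b > 0" "f u > 0" using f_pos b0x u xy by auto
    have "f (k + b) / Fy > f b / Fx" using Qb b0x by (simp add: Q_def P_def)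
    then have "f (k + b) * Fx > f b * Fy" using Fx0 Fy0 by (simp add: field_simps)
    then have "f (k + b) * Fx * f u > f b * Fy * f u" using fb by simp
    also have "f (k + b) * Fx * f u \<le> f (k + u) * f b * Fx" using r Fx0
      by (metis mult.commute mult.left_commute mult_le_cancel_left_pos)
    finally have "f b * (Fy * f u) < f b * (f (k + u) * Fx)" by (simp add: algebra_simps)
    then have "Fy * f u < f (k + u) * Fx" using fb by simp
    then show ?thesis using u Fx0 Fy0 by (simp add: Q_def P_def field_simps)
  qed
  have above: "Q u \<le> P u" if u: "u \<in> {0..x}" "c < u" for u
  proof (rule ccontr)
    assume "\<not> Q u \<le> P u"
    then have "u \<in> B" using u by (auto simp: B_def)
    then have "u \<le> c" unfolding c_def using bdd by (intro cSup_upper) auto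
    with u show False by simp
  qed
  define z where "z = (\<lambda>u. if u \<in> {-k..-k/2} then -(k/2) * (m / Fy) else 0)"
  have wz: "(u - c) * (Q u - P u) \<le> z u" if u: "u \<in> D" for u
  proof (cases "u < 0")
    case True
    then have Pu: "P u = 0" by (simp add: P_def)
    have Qm: "Q u \<ge> m / Fy" using Qpos[OF u] True xy by simp
    have Q0: "Q u \<ge> 0" using Qm m0 Fy0 by (smt (verit) divide_pos_pos)
    show ?thesis
    proof (cases "u \<le> -k/2")
      case True
      have "(u - c) * Q u \<le> u * Q u" using c0 Q0 by (simp add: mult_right_mono)
      also have "\<dots> \<le> (-k/2) * Q u" using True Q0 by (intro mult_right_mono) auto
      also have "\<dots> \<le> (-k/2) * (m / Fy)" using Qm k0 by (intro mult_left_mono_neg) auto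
      finally show ?thesis using True u Pu by (simp add: z_def D_def)
    next
      case False
      have "(u - c) * Q u \<le> 0" using c0 Q0 \<open>u < 0\<close> by (simp add: mult_nonpos_nonneg)
      then show ?thesis using False Pu by (simp add: z_def)
    qed
  next
    case False
    then have u0x: "u \<in> {0..x}" using u by (auto simp: D_def)
    have zu: "z u = 0" using False k0 by (simp add: z_def)
    have "(u - c) * (Q u - P u) \<le> 0"
    proof (cases "u < c")
      case True then show ?thesis using below[OF u0x] by (simp add: mult_nonpos_nonneg)
    next
      case False
      then show ?thesis using above[OF u0x] by (cases "u = c") (auto simp: mult_nonneg_nonpos)
    qed
    then show ?thesis using zu by simp
  qed
  have Z: "(z has_integral (-(k/2) * (m / Fy) * (k/2))) D"
  proof -
    have int: "{-k..-k/2} \<inter> D = {-k..-k/2}" using k0 xy by (auto simp: D_def)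
    have "((\<lambda>u. -(k/2) * (m / Fy)) has_integral (-(k/2) * (m / Fy) * (k/2))) {-k..-k/2}"
      using has_integral_const_real[of "-(k/2) * (m / Fy)" "-k" "-k/2"] k0 by (simp add: algebra_simps)
    then show ?thesis unfolding z_def has_integral_restrict_Int int .
  qed
  have W: "((\<lambda>u. (u - c) * (Q u - P u)) has_integral (Ty / Fy - k - Tx / Fx)) D"
  proof -
    have H: "((\<lambda>u. ((k + u) * f (k + u) - k * f (k + u)) / Fy - (if u \<in> {0..x} then u * f u else 0) / Fx
              - c * (f (k + u) / Fy) + c * ((if u \<in> {0..x} then f u else 0) / Fx))
          has_integral ((Ty - k * Fy) / Fy - Tx / Fx - c * (Fy / Fy) + c * (Fx / Fx))) D"
      by (intro has_integral_add has_integral_diff has_integral_divide has_integral_mult_right Q1 Q2 P1 P2)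
    have E: "(Ty - k * Fy) / Fy - Tx / Fx - c * (Fy / Fy) + c * (Fx / Fx) = Ty / Fy - k - Tx / Fx"
      using Fx0 Fy0 by (simp add: field_simps)
    show ?thesis
    proof (rule has_integral_eq[OF _ H[unfolded E]])
      fix u assume "u \<in> D"
      show "((k + u) * f (k + u) - k * f (k + u)) / Fy - (if u \<in> {0..x} then u * f u else 0) / Fx
              - c * (f (k + u) / Fy) + c * ((if u \<in> {0..x} then f u else 0) / Fx) = (u - c) * (Q u - P u)"
        using Fx0 Fy0 by (cases "u \<in> {0..x}") (auto simp: Q_def P_def field_simps)
    qed
  qed
  have "Ty / Fy - k - Tx / Fx \<le> -(k/2) * (m / Fy) * (k/2)"
    by (rule has_integral_le[OF W Z wz])
  also have "\<dots> < 0" using k0 m0 Fy0 by (simp add: mult_pos_pos)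
  finally show ?thesis by (simp add: cexp_def Ty_def Fy_def Tx_def Fx_def k_def)
qed


lemma vf: "value_fn I S pg p1 qg qn \<theta> = max (sale I S pg + max (sale I S qg) \<theta>) (max (sale I S p1) \<theta> + max (sale I S qn) \<theta>)"
  unfolding value_fn_def plans_def plan_pay_def
  by (simp add: UNIV_bool max_def)

lemma pint:
  fixes f W :: "real \<Rightarrow> real"
  assumes f_int: "f integrable_on {0..1}" and f_nn: "\<forall>x\<in>{0..1}. 0 \<le> f x"
    and W: "W \<in> borel_measurable borel" and B: "\<forall>x\<in>{0..1}. \<bar>W x\<bar> \<le> 1"
  shows "(\<lambda>x. W x * f x * (x - q)) integrable_on {0..1}"
proof -
  have Wm: "(\<lambda>x. W x * (x - q)) \<in> borel_measurable borel" using W by measurable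
  have "\<forall>x\<in>{0..1}. \<bar>W x * (x - q)\<bar> \<le> 1 + \<bar>q\<bar>"
  proof
    fix x :: real assume x: "x \<in> {0..1}"
    have "\<bar>W x * (x - q)\<bar> = \<bar>W x\<bar> * \<bar>x - q\<bar>" by (simp add: abs_mult)
    also have "\<dots> \<le> 1 * (1 + \<bar>q\<bar>)" using B x by (intro mult_mono) auto
    finally show "\<bar>W x * (x - q)\<bar> \<le> 1 + \<bar>q\<bar>" by simp
  qed
  from wint[OF f_int f_nn order.refl order.refl Wm this]
  show ?thesis by (simp add: ac_simps)
qed

lemma sale_ge: "I \<le> p \<Longrightarrow> sale I S p = p + S" and sale_lt: "\<not> I \<le> p \<Longrightarrow> sale I S p = p"
  by (auto simp: sale_def)


lemma ind_lt: fixes u v :: "real \<Rightarrow> real"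
  assumes "continuous_on UNIV u" "continuous_on UNIV v"
  shows "(\<lambda>x. indicator {x. u x < v x} x :: real) \<in> borel_measurable borel"
  using assms by (intro borel_measurable_indicator borel_open open_Collect_less)

lemma if_le: "f \<in> borel_measurable borel \<Longrightarrow> g \<in> borel_measurable borel \<Longrightarrow> (\<lambda>x::real. if x \<le> t then f x else g x :: real) \<in> borel_measurable borel"
  by (rule measurable_If) auto


theorem theorem3:
  fixes f :: "real \<Rightarrow> real" and I S pg \<theta>0 p0 :: real
    and th thg th2 p1 qg qn :: real and sig :: "real \<Rightarrow> real"
  assumes I_pos: "I > 0" and S_pos: "S > 0"
    and f_pos: "\<forall>x\<in>{0..1}. f x > 0"
    and f_int: "f integrable_on {0..1}" and f_mass: "integral {0..1} f = 1"
    and f_lc: "strictly_log_concave_on {0..1} f"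
    and f_reg: "\<forall>b\<in>{0<..1}. strict_mono_on {0<..<b} (\<lambda>a. 2 * cexp f a b - cexp f 0 a)"
    and th0: "0 < \<theta>0" "\<theta>0 < 1" "\<theta>0 - S = cexp f 0 \<theta>0"
    and th0_unique: "\<forall>x\<in>{0<..<1}. x - S = cexp f 0 x \<longrightarrow> x = \<theta>0"
    and p0_def: "p0 = cexp f 0 \<theta>0" and p0_I: "p0 \<ge> I"
    and pg: "p0 < pg" "pg < 1 - S"
    and eq: "transparent_eq I S pg f th thg th2 sig p1 qg qn"
    and short_lived: "thg = th2"
  shows "avg_gov f th sig < avg_mkt f th sig \<and> avg_mkt f th sig < pg
       \<and> th < \<theta>0 \<and> \<theta>0 < thg \<and> thg = pg + S
       \<and> pg < 2 * \<theta>0 - cexp f 0 \<theta>0"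
proof -
  have f_nn: "\<forall>x\<in>{0..1}. 0 \<le> f x" using f_pos by (auto intro: less_imp_le)
  obtain m K where m0: "0 < m" and mK: "\<forall>x\<in>{0..1}. m \<le> f x \<and> f x \<le> K"
    using fbounds[OF f_pos f_lc] by blast
  have mlow: "\<forall>x\<in>{0..1}. m \<le> f x" and fK: "\<forall>x\<in>{0..1}. f x \<le> K" using mK by auto
  have th2: "th2 = thg" using short_lived by simp
  note eq' = eq[unfolded transparent_eq_def Let_def th2 vf]
  define P where "P = sale I S pg"
  define g where "g = sale I S qg"
  define a where "a = sale I S p1"
  define n where "n = sale I S qn"
  define V where "V = (\<lambda>\<theta>::real. max (P + max g \<theta>) (max a \<theta> + max n \<theta>))"
  have pgI: "I \<le> pg" using pg p0_I by simp
  have PS: "P = pg + S" using pgI by (simp add: P_def sale_def)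
  define wR where "wR = (\<lambda>\<theta>::real. if \<theta> \<le> th then sig \<theta> else 0)"
  define wM where "wM = (\<lambda>\<theta>::real. if \<theta> \<le> th then 1 - sig \<theta> else 0)"
  define wG where "wG = (\<lambda>\<theta>::real. if \<theta> \<le> th then sig \<theta> else if \<theta> \<le> thg then 1 else (0::real))"
  have basic: "0 < th" "th \<le> thg" "thg \<le> 1" using eq' by auto
  have sigm: "sig \<in> borel_measurable borel" using eq' by auto
  have sig01: "\<forall>\<theta>\<in>{0..th}. 0 \<le> sig \<theta> \<and> sig \<theta> \<le> 1" using eq' by auto
  have st: "strat th thg thg sig \<theta> (Gov, True) = wR \<theta>"
           "strat th thg thg sig \<theta> (Mkt, True) + strat th thg thg sig \<theta> (Mkt, False) = wM \<theta>"
           "strat th thg thg sig \<theta> (Mkt, True) + strat th thg thg sig \<theta> (NoSale, True) = wM \<theta>"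
           "strat th thg thg sig \<theta> (Gov, True) + strat th thg thg sig \<theta> (Gov, False) = wG \<theta>" for \<theta>
    using basic by (auto simp: strat_def wR_def wM_def wG_def)
  have optR: "\<forall>\<theta>\<in>{0..1}. \<forall>pl. 0 < strat th thg thg sig \<theta> pl \<longrightarrow> plan_pay I S pg p1 qg qn \<theta> pl = max (sale I S pg + max (sale I S qg) \<theta>) (max (sale I S p1) \<theta> + max (sale I S qn) \<theta>)"
    using eq' by (elim conjE) assumption
  have opt: "\<forall>\<theta>\<in>{0..1}. \<forall>pl. 0 < strat th thg thg sig \<theta> pl \<longrightarrow> plan_pay I S pg p1 qg qn \<theta> pl = V \<theta>"
    using optR by (simp only: V_def P_def g_def a_def n_def)
  have E1r: "0 \<le> profit f (\<lambda>\<theta>. strat th thg thg sig \<theta> (Mkt, True) + strat th thg thg sig \<theta> (Mkt, False)) p1"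
    using eq' by (elim conjE) assumption
  have E1: "profit f wM p1 \<ge> 0" using E1r by (simp only: st)
  have E2r: "\<forall>p'. profit f (\<lambda>\<theta>. indicator {\<theta>. sale I S p' + max (sale I S qn) \<theta> > max (sale I S pg + max (sale I S qg) \<theta>) (max (sale I S p1) \<theta> + max (sale I S qn) \<theta>)} \<theta>) p' \<le> 0"
    using eq' by (elim conjE) assumption
  have E2: "\<forall>p'. profit f (\<lambda>\<theta>. indicator {\<theta>. V \<theta> < sale I S p' + max n \<theta>} \<theta>) p' \<le> 0"
    unfolding V_def P_def g_def a_def n_def using E2r by simp
  have E3r: "0 \<le> profit f (\<lambda>\<theta>. strat th thg thg sig \<theta> (Gov, True)) qg"
    using eq' by (elim conjE) assumption
  have E3: "profit f wR qg \<ge> 0" using E3r by (simp only: st)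
  have E4r: "\<forall>q'. profit f (\<lambda>\<theta>. (strat th thg thg sig \<theta> (Gov, True) + strat th thg thg sig \<theta> (Gov, False)) * indicator {\<theta>. sale I S q' > max (sale I S qg) \<theta>} \<theta>) q' \<le> 0"
    using eq' by (elim conjE) assumption
  have E4: "\<forall>q'. profit f (\<lambda>\<theta>. wG \<theta> * indicator {\<theta>. max g \<theta> < sale I S q'} \<theta>) q' \<le> 0"
    unfolding g_def using E4r by (simp only: st(4) simp_thms)
  have E5r: "0 \<le> profit f (\<lambda>\<theta>. strat th thg thg sig \<theta> (Mkt, True) + strat th thg thg sig \<theta> (NoSale, True)) qn"
    using eq' by (elim conjE) assumption
  have E5: "profit f wM qn \<ge> 0" using E5r by (simp only: st)
  have E6r: "\<forall>q'. profit f (\<lambda>\<theta>. (1 - (strat th thg thg sig \<theta> (Gov, True) + strat th thg thg sig \<theta> (Gov, False))) * indicator {\<theta>. sale I S q' > max (sale I S qn) \<theta>} \<theta>) q' \<le> 0"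
    using eq' by (elim conjE) assumption
  have E6: "\<forall>q'. profit f (\<lambda>\<theta>. (1 - wG \<theta>) * indicator {\<theta>. max n \<theta> < sale I S q'} \<theta>) q' \<le> 0"
    unfolding n_def using E6r by (simp only: st(4) simp_thms)
  have optG: "P + g = V \<theta>" if "\<theta> \<in> {0..1}" "\<theta> \<le> th" "0 < sig \<theta>" for \<theta>
  proof -
    have "0 < strat th thg thg sig \<theta> (Gov, True) \<longrightarrow> plan_pay I S pg p1 qg qn \<theta> (Gov, True) = V \<theta>"
      using opt that(1) by blast
    then show ?thesis using that basic by (simp add: strat_def plan_pay_def P_def g_def)
  qed
  have optM: "a + n = V \<theta>" if "\<theta> \<in> {0..1}" "\<theta> \<le> th" "sig \<theta> < 1" for \<theta>
  proof -
    have "0 < strat th thg thg sig \<theta> (Mkt, True) \<longrightarrow> plan_pay I S pg p1 qg qn \<theta> (Mkt, True) = V \<theta>"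
      using opt that(1) by blast
    then show ?thesis using that basic by (simp add: strat_def plan_pay_def a_def n_def)
  qed
  have optF: "P + \<theta> = V \<theta>" if "\<theta> \<in> {0..1}" "th < \<theta>" "\<theta> \<le> thg" for \<theta>
  proof -
    have "0 < strat th thg thg sig \<theta> (Gov, False) \<longrightarrow> plan_pay I S pg p1 qg qn \<theta> (Gov, False) = V \<theta>"
      using opt that(1) by blast
    then show ?thesis using that basic by (simp add: strat_def plan_pay_def P_def)
  qed
  have optN: "\<theta> + \<theta> = V \<theta>" if "\<theta> \<in> {0..1}" "thg < \<theta>" for \<theta>
  proof -
    have "0 < strat th thg thg sig \<theta> (NoSale, False) \<longrightarrow> plan_pay I S pg p1 qg qn \<theta> (NoSale, False) = V \<theta>"
      using opt that(1) by blast
    then show ?thesis using that basic by (simp add: strat_def plan_pay_def )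
  qed
  have Vge: "P + max g \<theta> \<le> V \<theta>" "max a \<theta> + max n \<theta> \<le> V \<theta>" for \<theta> by (auto simp: V_def)
  define G where "G = integral {0..th} (\<lambda>\<theta>. sig \<theta> * f \<theta>)"
  define Gt where "Gt = integral {0..th} (\<lambda>\<theta>. \<theta> * sig \<theta> * f \<theta>)"
  define M where "M = integral {0..th} (\<lambda>\<theta>. (1 - sig \<theta>) * f \<theta>)"
  define Mt where "Mt = integral {0..th} (\<lambda>\<theta>. \<theta> * (1 - sig \<theta>) * f \<theta>)"
  define Fth where "Fth = integral {0..th} f"
  define Tth where "Tth = integral {0..th} (\<lambda>\<theta>. \<theta> * f \<theta>)"
  have th1: "th \<le> 1" using basic by simp
  have sigm': "(\<lambda>\<theta>. 1 - sig \<theta>) \<in> borel_measurable borel" "(\<lambda>\<theta>. \<theta> * sig \<theta>) \<in> borel_measurable borel"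
    "(\<lambda>\<theta>. \<theta> * (1 - sig \<theta>)) \<in> borel_measurable borel" using sigm by measurable
  have iG: "(\<lambda>\<theta>. sig \<theta> * f \<theta>) integrable_on {0..th}"
    by (rule wint[OF f_int f_nn order.refl th1 sigm, of 1]) (use sig01 in auto)
  have iM: "(\<lambda>\<theta>. (1 - sig \<theta>) * f \<theta>) integrable_on {0..th}"
    by (rule wint[OF f_int f_nn order.refl th1 sigm'(1), of 1]) (use sig01 in auto)
  have iGt: "(\<lambda>\<theta>. \<theta> * sig \<theta> * f \<theta>) integrable_on {0..th}"
  proof (rule wint[OF f_int f_nn order.refl th1 sigm'(2), of 1])
    show "\<forall>x\<in>{0..th}. \<bar>x * sig x\<bar> \<le> 1" using sig01 th1 by (auto simp: abs_mult intro: mult_le_one)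
  qed
  have iMt: "(\<lambda>\<theta>. \<theta> * (1 - sig \<theta>) * f \<theta>) integrable_on {0..th}"
  proof (rule wint[OF f_int f_nn order.refl th1 sigm'(3), of 1])
    show "\<forall>x\<in>{0..th}. \<bar>x * (1 - sig x)\<bar> \<le> 1" using sig01 th1 by (auto simp: abs_mult intro: mult_le_one)
  qed
  have G0: "G \<ge> 0" unfolding G_def by (rule integral_nonneg[OF iG]) (use sig01 f_nn th1 in auto)
  have M0: "M \<ge> 0" unfolding M_def by (rule integral_nonneg[OF iM]) (use sig01 f_nn th1 in auto)
  have Gt0: "Gt \<ge> 0" unfolding Gt_def by (rule integral_nonneg[OF iGt]) (use sig01 f_nn th1 in auto)
  have Mt0: "Mt \<ge> 0" unfolding Mt_def by (rule integral_nonneg[OF iMt]) (use sig01 f_nn th1 in auto)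
  have GtG: "Gt \<le> th * G"
  proof -
    have "Gt \<le> integral {0..th} (\<lambda>\<theta>. th * (sig \<theta> * f \<theta>))" unfolding Gt_def
      by (rule integral_le[OF iGt integrable_on_mult_right[OF iG]])
         (use sig01 f_nn th1 in \<open>auto intro!: mult_right_mono simp: mult.assoc\<close>)
    then show ?thesis by (simp add: G_def)
  qed
  have MtM: "Mt \<le> th * M"
  proof -
    have "Mt \<le> integral {0..th} (\<lambda>\<theta>. th * ((1 - sig \<theta>) * f \<theta>))" unfolding Mt_def
      by (rule integral_le[OF iMt integrable_on_mult_right[OF iM]])
         (use sig01 f_nn th1 in \<open>auto intro!: mult_right_mono simp: mult.assoc\<close>)
    then show ?thesis by (simp add: M_def)
  qed
  have GM: "G + M = Fth"
    unfolding G_def M_def Fth_def integral_add[OF iG iM, symmetric] by (simp add: algebra_simps)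
  have GMt: "Gt + Mt = Tth"
    unfolding Gt_def Mt_def Tth_def integral_add[OF iGt iMt, symmetric] by (simp add: algebra_simps)
  have Fth0: "Fth > 0"
  proof -
    have "integral {0..th} (\<lambda>t. m) \<le> Fth" unfolding Fth_def
      by (rule integral_le) (use integrable_on_subinterval[OF f_int] th1 mlow in auto)
    then show ?thesis using basic m0 by (simp add: mult_pos_pos) (smt (verit) mult_pos_pos)
  qed
  have cexp_th: "cexp f 0 th = (Gt + Mt) / (G + M)" by (simp add: cexp_def GM GMt Tth_def Fth_def)
  have strictG: "Gt < th * G" if "G > 0"
    unfolding Gt_def G_def
    by (rule strict_avg[OF f_int f_nn fK basic(1) th1 sigm]) (use sig01 that in \<open>auto simp: G_def\<close>)
  have strictM: "Mt < th * M" if "M > 0"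
    unfolding Mt_def M_def
    by (rule strict_avg[OF f_int f_nn fK basic(1) th1 sigm'(1)]) (use sig01 that in \<open>auto simp: M_def\<close>)
  have inter: "{..th} \<inter> {0..1} = {0..th}" using th1 by auto
  have PR: "profit f wR q = Gt - q * G" for q
  proof -
    have "profit f wR q = integral {0..1} (\<lambda>\<theta>. if \<theta> \<in> {..th} then sig \<theta> * f \<theta> * (\<theta> - q) else 0)"
      unfolding profit_def wR_def by (rule integral_cong) auto
    also have "\<dots> = integral {0..th} (\<lambda>\<theta>. \<theta> * sig \<theta> * f \<theta> - q * (sig \<theta> * f \<theta>))"
      unfolding integral_restrict_Int inter by (rule integral_cong) (simp add: algebra_simps)
    also have "\<dots> = Gt - q * G" unfolding Gt_def G_def
      by (subst integral_diff[OF iGt integrable_on_mult_right[OF iG]]) simp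
    finally show ?thesis .
  qed
  have PM: "profit f wM q = Mt - q * M" for q
  proof -
    have "profit f wM q = integral {0..1} (\<lambda>\<theta>. if \<theta> \<in> {..th} then (1 - sig \<theta>) * f \<theta> * (\<theta> - q) else 0)"
      unfolding profit_def wM_def by (rule integral_cong) auto
    also have "\<dots> = integral {0..th} (\<lambda>\<theta>. \<theta> * (1 - sig \<theta>) * f \<theta> - q * ((1 - sig \<theta>) * f \<theta>))"
      unfolding integral_restrict_Int inter by (rule integral_cong) (simp add: algebra_simps)
    also have "\<dots> = Mt - q * M" unfolding Mt_def M_def
      by (subst integral_diff[OF iMt integrable_on_mult_right[OF iM]]) simp
    finally show ?thesis .
  qed
  have wRm: "wR \<in> borel_measurable borel" unfolding wR_def using sigm by (intro if_le) auto
  have wMm: "wM \<in> borel_measurable borel" unfolding wM_def using sigm'(1) by (intro if_le) auto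
  have wGm: "wG \<in> borel_measurable borel" unfolding wG_def using sigm by (intro if_le) auto
  have wR1: "\<forall>x\<in>{0..1}. \<bar>wR x\<bar> \<le> 1" using sig01 by (auto simp: wR_def)
  have wM1: "\<forall>x\<in>{0..1}. \<bar>wM x\<bar> \<le> 1" using sig01 by (auto simp: wM_def)
  have wG1: "\<forall>x\<in>{0..1}. \<bar>wG x\<bar> \<le> 1 \<and> 0 \<le> wG x \<and> wG x \<le> 1" using sig01 by (auto simp: wG_def)
  have iR: "(\<lambda>\<theta>. wR \<theta> * f \<theta> * (\<theta> - q)) integrable_on {0..1}" for q by (rule pint[OF f_int f_nn wRm wR1])
  have iMM: "(\<lambda>\<theta>. wM \<theta> * f \<theta> * (\<theta> - q)) integrable_on {0..1}" for q by (rule pint[OF f_int f_nn wMm wM1])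
  have hR: "((\<lambda>\<theta>. wR \<theta> * f \<theta> * (\<theta> - q)) has_integral (Gt - q * G)) {0..1}" for q
    using integrable_integral[OF iR, of q] PR[of q] unfolding profit_def by simp
  have hM: "((\<lambda>\<theta>. wM \<theta> * f \<theta> * (\<theta> - q)) has_integral (Mt - q * M)) {0..1}" for q
    using integrable_integral[OF iMM, of q] PM[of q] unfolding profit_def by simp
  have cmp: "J \<le> profit f W q" if W: "W \<in> borel_measurable borel" "\<forall>x\<in>{0..1}. \<bar>W x\<bar> \<le> 1"
    and lf: "(lf has_integral J) {0..1}" and le: "\<And>\<theta>. \<theta> \<in> {0..1} \<Longrightarrow> lf \<theta> \<le> W \<theta> * f \<theta> * (\<theta> - q)"
    for W lf J q
    unfolding profit_def by (rule has_integral_le[OF lf integrable_integral[OF pint[OF f_int f_nn W]] le])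
  have bump: "((\<lambda>\<theta>. if \<theta> \<in> {l..u} then h else 0) has_integral (h * (u - l))) {0..1}"
    if "0 \<le> l" "l \<le> u" "u \<le> 1" for l u h :: real
  proof -
    have i: "{l..u} \<inter> {0..1} = {l..u}" using that by auto
    show ?thesis unfolding has_integral_restrict_Int i
      using has_integral_const_real[of h l u] that by (simp add: mult.commute)
  qed
  have ex1: "\<exists>\<theta>\<in>{0..th}. 0 < sig \<theta>" if "G > 0"
  proof (rule ccontr)
    assume "\<not> ?thesis"
    then have "\<forall>\<theta>\<in>{0..th}. sig \<theta> = 0" using sig01 by force
    then have "G = integral {0..th} (\<lambda>\<theta>. 0::real)" unfolding G_def by (intro integral_cong) auto
    with that show False by simp
  qed
  have ex2: "\<exists>\<theta>\<in>{0..th}. sig \<theta> < 1" if "M > 0"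
  proof (rule ccontr)
    assume "\<not> ?thesis"
    then have "\<forall>\<theta>\<in>{0..th}. 1 - sig \<theta> = 0" using sig01 by force
    then have "M = integral {0..th} (\<lambda>\<theta>. 0::real)" unfolding M_def by (intro integral_cong) auto
    with that show False by simp
  qed
  have thI: "th \<in> {0..1}" using basic by auto
  have Vth: "V th = P + g \<or> V th = a + n"
    using optG[OF thI order.refl] optM[OF thI order.refl] by force
  have Vle: "V \<theta> \<le> max (P + g) (a + n)" if "\<theta> \<in> {0..1}" "\<theta> \<le> th" for \<theta>
    using optG[OF that] optM[OF that] by force
  have gen: "a + n \<le> V \<theta>" "P + g \<le> V \<theta>" for \<theta> using Vge[of \<theta>] by auto
  have p0S: "\<theta>0 = p0 + S" using th0 p0_def by simp
  have th0P: "\<theta>0 < P" using p0S pg PS by simp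
  have P1: "P < 1" using PS pg by simp
  have avgG: "avg_gov f th sig = Gt / G" by (simp add: avg_gov_def Gt_def G_def)
  have avgM: "avg_mkt f th sig = Mt / M" by (simp add: avg_mkt_def Mt_def M_def)
  show ?thesis
  proof (cases "th = thg")
    case True
    have Pth: "P \<le> th"
    proof (cases "th < 1")
      case True
      show ?thesis
      proof (rule ccontr)
        assume "\<not> P \<le> th"
        define \<theta> where "\<theta> = (th + P) / 2"
        have "\<theta> \<in> {0..1}" "thg < \<theta>" "\<theta> < P" using \<open>\<not> P \<le> th\<close> basic P1 \<open>th = thg\<close> by (auto simp: \<theta>_def)
        then show False using optN[of \<theta>] Vge[of \<theta>] by auto
      qed
    next
      case False then show ?thesis using P1 by simp
    qed
    have Vth2: "V th \<ge> th + th" using Vge[of th] by auto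
    have Gi: "Gt \<ge> (th - S) * G"
    proof (cases "G > 0")
      case False then have "G = 0" using G0 by simp
      then show ?thesis using Gt0 by simp
    next
      case True
      obtain \<theta>1 where t1: "\<theta>1 \<in> {0..th}" "0 < sig \<theta>1" using ex1[OF True] by blast
      have t1': "\<theta>1 \<in> {0..1}" using t1 th1 by auto
      have "V th \<le> P + g" using Vle[OF thI order.refl] optG[OF t1' _ t1(2)] gen[of \<theta>1] t1 by auto
      then have gth: "g \<ge> th" using Vth2 Pth by simp
      have "qg * G \<le> Gt" using E3 PR by simp
      then have qgG: "qg * G < th * G" using strictG[OF True] by simp
      then have "qg < th" using True by simp
      then have qgI: "I \<le> qg" using gth unfolding g_def by (auto simp: sale_def split: if_splits)
      then have "qg \<ge> th - S" using gth unfolding g_def by (simp add: sale_def)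
      then show ?thesis using \<open>qg * G \<le> Gt\<close> True by (smt (verit) mult_right_mono)
    qed
    have Mi: "Mt \<ge> (th - S) * M"
    proof (cases "M > 0")
      case False then have "M = 0" using M0 by simp
      then show ?thesis using Mt0 by simp
    next
      case True
      obtain \<theta>2 where t2: "\<theta>2 \<in> {0..th}" "sig \<theta>2 < 1" using ex2[OF True] by blast
      have t2': "\<theta>2 \<in> {0..1}" using t2 th1 by auto
      have "V th \<le> a + n" using Vle[OF thI order.refl] optM[OF t2' _ t2(2)] gen[of \<theta>2] t2 by auto
      then have "a + n \<ge> max a th + max n th" using Vge[of th] by simp
      then have nth: "n \<ge> th" by simp
      have "qn * M \<le> Mt" using E5 PM by simp
      then have "qn * M < th * M" using strictM[OF True] by simp
      then have "qn < th" using True by simp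
      then have qnI: "I \<le> qn" using nth unfolding n_def by (auto simp: sale_def split: if_splits)
      then have "qn \<ge> th - S" using nth unfolding n_def by (simp add: sale_def)
      then show ?thesis using \<open>qn * M \<le> Mt\<close> True by (smt (verit) mult_right_mono)
    qed
    have "Gt + Mt \<ge> (th - S) * (G + M)" using Gi Mi by (simp add: algebra_simps)
    then have c1: "cexp f 0 th \<ge> th - S" unfolding cexp_th using GM Fth0 by (simp add: field_simps)
    have "cexp f 0 th - cexp f 0 \<theta>0 < th - \<theta>0"
      by (rule psi_mono[OF f_int f_pos f_lc m0 mlow th0(1) _ th1]) (use th0P Pth in simp)
    then have False using c1 th0(3) by simp
    then show ?thesis ..
  next
    case False
    then have ththg: "th < thg" using basic by simp
    have thg1: "thg < 1"
    proof (rule ccontr)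
      assume "\<not> thg < 1"
      then have "thg = 1" using basic by simp
      then have "P + 1 = V 1" using optF[of 1] ththg by simp
      moreover have "V 1 \<ge> 1 + 1" using Vge[of 1] by simp
      ultimately show False using P1 by simp
    qed
    have thgP: "thg = P"
    proof -
      have "thg \<in> {0..1}" using basic by simp
      then have "P + thg = V thg" using optF[of thg] ththg by simp
      then have le: "thg \<le> P" using Vge[of thg] by simp
      have "\<not> thg < P"
      proof
        assume "thg < P"
        define \<theta> where "\<theta> = (thg + P) / 2"
        have "\<theta> \<in> {0..1}" "thg < \<theta>" "\<theta> < P" using \<open>thg < P\<close> basic P1 by (auto simp: \<theta>_def)
        then show False using optN[of \<theta>] Vge[of \<theta>] by auto
      qed
      with le show ?thesis by simp
    qed
    have gth: "g \<le> th"
    proof (rule ccontr)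
      assume "\<not> g \<le> th"
      define \<theta> where "\<theta> = (th + min g thg) / 2"
      have "\<theta> \<in> {0..1}" "th < \<theta>" "\<theta> \<le> thg" "\<theta> < g" using \<open>\<not> g \<le> th\<close> basic ththg
        by (auto simp: \<theta>_def)
      then show False using optF[of \<theta>] Vge[of \<theta>] by auto
    qed
    have anth: "a + n \<le> P + th"
    proof (rule ccontr)
      assume "\<not> a + n \<le> P + th"
      define dd where "dd = min (a + n - P - th) (thg - th)"
      have dd: "0 < dd" "dd \<le> a + n - P - th" "dd \<le> thg - th" using \<open>\<not> a + n \<le> P + th\<close> ththg
        by (auto simp: dd_def)
      define \<theta> where "\<theta> = th + dd / 2"
      have "\<theta> \<in> {0..1}" "th < \<theta>" "\<theta> \<le> thg" "P + \<theta> < a + n" using dd basic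
        unfolding \<theta>_def by auto
      then show False using optF[of \<theta>] gen[of \<theta>] by auto
    qed
    have nP: "n \<le> P"
    proof -
      have "thg \<in> {0..1}" using basic by simp
      then have "P + thg = V thg" using optF[of thg] ththg by simp
      then show ?thesis using Vge(2)[of thg] by simp
    qed
    have VthE: "V th = P + th"
    proof -
      have "V th \<ge> P + th" using Vge(1)[of th] by simp
      moreover have "V th \<le> P + th" using Vth gth anth by auto
      ultimately show ?thesis by simp
    qed
    have Gpos: "G > 0"
    proof (rule ccontr)
      assume "\<not> G > 0"
      then have G00: "G = 0" using G0 by simp
      then have Gt00: "Gt = 0" using Gt0 GtG by simp
      have Mpos: "M > 0" using GM Fth0 G00 by simp
      obtain \<theta>2 where t2: "\<theta>2 \<in> {0..th}" "sig \<theta>2 < 1" using ex2[OF Mpos] by blast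
      have t2': "\<theta>2 \<in> {0..1}" using t2 th1 by auto
      have "V th \<le> a + n" using Vle[OF thI order.refl] optM[OF t2' _ t2(2)] gen[of \<theta>2] t2 by auto
      then have "a + n \<ge> max a th + max n th" using Vge[of th] by simp
      then have nth: "n \<ge> th" by simp
      have "qn * M \<le> Mt" using E5 PM by simp
      then have "qn * M < th * M" using strictM[OF Mpos] by simp
      then have "qn < th" using Mpos by simp
      then have qnI: "I \<le> qn" using nth unfolding n_def by (auto simp: sale_def split: if_splits)
      define q' where "q' = max I (th - S/2)"
      have q'I: "I \<le> q'" by (simp add: q'_def)
      have q'th: "q' < th" using qnI \<open>qn < th\<close> S_pos by (simp add: q'_def)
      have q'S: "th < q' + S" using S_pos by (simp add: q'_def)
      have sq: "sale I S q' = q' + S" using q'I by (simp add: sale_def)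
      define d where "d = min (thg - th) (q' + S - th) / 2"
      have d0: "d > 0" using ththg q'S by (simp add: d_def)
      have dm: "2 * d \<le> thg - th" "2 * d \<le> q' + S - th" by (auto simp: d_def)
      have d1: "th + d < thg" "th + d < q' + S" using dm d0 by auto
      define hgt where "hgt = m * (th - q')"
      define W where "W = (\<lambda>\<theta>. wG \<theta> * indicator {\<theta>. max g \<theta> < sale I S q'} \<theta>)"
      have Wm: "W \<in> borel_measurable borel" unfolding W_def
        by (intro borel_measurable_times wGm ind_lt continuous_intros)
      have W1: "\<forall>x\<in>{0..1}. \<bar>W x\<bar> \<le> 1" using wG1 by (auto simp: W_def indicator_def)
      have lfi: "((\<lambda>\<theta>. wR \<theta> * f \<theta> * (\<theta> - q') + (if \<theta> \<in> {th + d/2..th + d} then hgt else 0))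
                  has_integral ((Gt - q' * G) + hgt * (th + d - (th + d/2)))) {0..1}"
        by (intro has_integral_add hR bump) (use d0 d1 basic in auto)
      have "(Gt - q' * G) + hgt * (th + d - (th + d/2)) \<le> profit f W q'"
      proof (rule cmp[OF Wm W1 lfi])
        fix \<theta> :: real assume t: "\<theta> \<in> {0..1}"
        show "wR \<theta> * f \<theta> * (\<theta> - q') + (if \<theta> \<in> {th + d/2..th + d} then hgt else 0) \<le> W \<theta> * f \<theta> * (\<theta> - q')"
        proof (cases "\<theta> \<le> th")
          case True
          then have z: "(if \<theta> \<in> {th + d/2..th + d} then hgt else 0) = 0" using d0 by auto
          have "max g \<theta> < sale I S q'" using True gth q'S sq by simp
          then show ?thesis unfolding z using True by (simp add: W_def wR_def wG_def)
        next
          case False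
          have fm: "m \<le> f \<theta>" using mlow t by auto
          show ?thesis
          proof (cases "\<theta> \<le> thg")
            case True
            have W\<theta>: "W \<theta> = indicator {\<theta>. max g \<theta> < sale I S q'} \<theta>" using False True by (simp add: W_def wG_def)
            have nn: "0 \<le> f \<theta> * (\<theta> - q')" using False q'th t f_nn by auto
            show ?thesis
            proof (cases "\<theta> \<in> {th + d/2..th + d}")
              case True
              then have "max g \<theta> < sale I S q'" using gth d1 sq False by auto
              then have "W \<theta> = 1" using W\<theta> by simp
              moreover have "hgt \<le> f \<theta> * (\<theta> - q')" unfolding hgt_def
                using fm False q'th m0 by (intro mult_mono) auto
              ultimately show ?thesis using True False by (simp add: wR_def)
            next
              case False
              then have z: "(if \<theta> \<in> {th + d/2..th + d} then hgt else 0) = 0" by auto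
              show ?thesis unfolding z using \<open>\<not> \<theta> \<le> th\<close> nn W\<theta> by (simp add: wR_def indicator_def)
            qed
          next
            case False
            then have z: "(if \<theta> \<in> {th + d/2..th + d} then hgt else 0) = 0" using d1 by auto
            show ?thesis unfolding z using False \<open>\<not> \<theta> \<le> th\<close> ththg by (simp add: W_def wR_def wG_def)
          qed
        qed
      qed
      moreover have "profit f W q' \<le> 0" using E4 by (simp add: W_def)
      moreover have "hgt * (th + d - (th + d/2)) > 0" using m0 q'th d0 by (simp add: hgt_def)
      ultimately show False using G00 Gt00 by simp
    qed
    have Mpos: "M > 0"
    proof (rule ccontr)
      assume "\<not> M > 0"
      then have M00: "M = 0" using M0 by simp
      then have Mt00: "Mt = 0" using Mt0 MtM by simp
      define q' where "q' = thg - S/2"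
      have q'I: "I \<le> q'" using thgP PS pgI S_pos by (simp add: q'_def)
      have sq: "sale I S q' = thg + S/2" using q'I by (simp add: sale_def q'_def)
      define d where "d = min (1 - thg) (S/2) / 2"
      have d0: "d > 0" using thg1 S_pos by (simp add: d_def)
      have dm: "2 * d \<le> 1 - thg" "2 * d \<le> S/2" unfolding d_def by (simp_all add: min_def)
      have d1: "thg + d < 1" "thg + d < thg + S/2" using dm d0 by auto
      define hgt where "hgt = m * (S/2)"
      define W where "W = (\<lambda>\<theta>. (1 - wG \<theta>) * indicator {\<theta>. max n \<theta> < sale I S q'} \<theta>)"
      have Wm: "W \<in> borel_measurable borel" unfolding W_def
        by (intro borel_measurable_times borel_measurable_diff wGm ind_lt continuous_intros) auto
      have W1: "\<forall>x\<in>{0..1}. \<bar>W x\<bar> \<le> 1" using wG1 by (auto simp: W_def indicator_def)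
      have lfi: "((\<lambda>\<theta>. wM \<theta> * f \<theta> * (\<theta> - q') + (if \<theta> \<in> {thg + d/2..thg + d} then hgt else 0))
                  has_integral ((Mt - q' * M) + hgt * (thg + d - (thg + d/2)))) {0..1}"
        by (intro has_integral_add hM bump) (use d0 d1 basic in auto)
      have "(Mt - q' * M) + hgt * (thg + d - (thg + d/2)) \<le> profit f W q'"
      proof (rule cmp[OF Wm W1 lfi])
        fix \<theta> :: real assume t: "\<theta> \<in> {0..1}"
        show "wM \<theta> * f \<theta> * (\<theta> - q') + (if \<theta> \<in> {thg + d/2..thg + d} then hgt else 0) \<le> W \<theta> * f \<theta> * (\<theta> - q')"
        proof (cases "\<theta> \<le> thg")
          case True
          then have z: "(if \<theta> \<in> {thg + d/2..thg + d} then hgt else 0) = 0" using d0 by auto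
          show ?thesis
          proof (cases "\<theta> \<le> th")
            case True
            have "max n \<theta> < sale I S q'" using True nP thgP sq S_pos ththg by simp
            then show ?thesis unfolding z using True by (simp add: W_def wM_def wG_def)
          next
            case False
            then show ?thesis unfolding z using \<open>\<theta> \<le> thg\<close> by (simp add: W_def wM_def wG_def)
          qed
        next
          case False
          have fm: "m \<le> f \<theta>" using mlow t by auto
          have W\<theta>: "W \<theta> = indicator {\<theta>. max n \<theta> < sale I S q'} \<theta>" using False ththg by (simp add: W_def wG_def)
          have wM0: "wM \<theta> = 0" using False ththg by (simp add: wM_def)
          have nn: "0 \<le> f \<theta> * (\<theta> - q')" using False t f_nn S_pos by (auto simp: q'_def)
          show ?thesis
          proof (cases "\<theta> \<in> {thg + d/2..thg + d}")
            case True
            then have "max n \<theta> < sale I S q'" using nP thgP d1 sq False by auto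
            then have "W \<theta> = 1" using W\<theta> by simp
            moreover have "hgt \<le> f \<theta> * (\<theta> - q')" unfolding hgt_def
              using fm False m0 S_pos by (intro mult_mono) (auto simp: q'_def)
            ultimately show ?thesis using True wM0 by simp
          next
            case False
            then have z: "(if \<theta> \<in> {thg + d/2..thg + d} then hgt else 0) = 0" by auto
            show ?thesis unfolding z using nn W\<theta> wM0 by (simp add: indicator_def)
          qed
        qed
      qed
      moreover have "profit f W q' \<le> 0" using E6 by (simp add: W_def)
      moreover have "hgt * (thg + d - (thg + d/2)) > 0" using m0 S_pos d0 by (simp add: hgt_def)
      ultimately show False using M00 Mt00 by simp
    qed
    obtain \<theta>1 where t1: "\<theta>1 \<in> {0..th}" "0 < sig \<theta>1" using ex1[OF Gpos] by blast
    have t1': "\<theta>1 \<in> {0..1}" using t1 th1 by auto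
    obtain \<theta>2 where t2: "\<theta>2 \<in> {0..th}" "sig \<theta>2 < 1" using ex2[OF Mpos] by blast
    have t2': "\<theta>2 \<in> {0..1}" using t2 th1 by auto
    have Cg: "P + g = V \<theta>1" using optG[OF t1'] t1 by auto
    have Cm: "a + n = V \<theta>2" using optM[OF t2'] t2 by auto
    have gE: "g = th"
    proof -
      have "V th \<le> P + g" using Vle[OF thI order.refl] Cg gen[of \<theta>1] by auto
      then show ?thesis using VthE gth by simp
    qed
    have anE: "a + n = P + th"
    proof -
      have "V th \<le> a + n" using Vle[OF thI order.refl] Cm gen[of \<theta>2] by auto
      then show ?thesis using VthE anth by simp
    qed
    have nth: "n \<ge> th"
    proof -
      have "V th \<le> a + n" using Vle[OF thI order.refl] Cm gen[of \<theta>2] by auto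
      then have "a + n \<ge> max a th + max n th" using Vge[of th] by simp
      then show ?thesis by simp
    qed
    have VE: "V \<theta> = P + th" if "\<theta> \<in> {0..1}" "\<theta> \<le> th" for \<theta>
      using optG[OF that] optM[OF that] gE anE by force
    have qgG: "qg * G \<le> Gt" using E3 PR by simp
    then have "qg * G < th * G" using strictG[OF Gpos] by simp
    then have "qg < th" using Gpos by simp
    then have qgI: "I \<le> qg" using gE unfolding g_def by (auto simp: sale_def split: if_splits)
    then have qgE: "qg = th - S" using gE unfolding g_def by (simp add: sale_def)
    have Gup: "Gt \<le> (th - S + e) * G" if e: "0 < e" "e < S" for e
    proof -
      define q' where "q' = th - S + e"
      have q'I: "I \<le> q'" using qgI qgE e by (simp add: q'_def)
      have sq: "sale I S q' = th + e" using q'I by (simp add: sale_def q'_def)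
      define W where "W = (\<lambda>\<theta>. wG \<theta> * indicator {\<theta>. max g \<theta> < sale I S q'} \<theta>)"
      have Wm: "W \<in> borel_measurable borel" unfolding W_def
        by (intro borel_measurable_times wGm ind_lt continuous_intros)
      have W1: "\<forall>x\<in>{0..1}. \<bar>W x\<bar> \<le> 1" using wG1 by (auto simp: W_def indicator_def)
      have "Gt - q' * G \<le> profit f W q'"
      proof (rule cmp[OF Wm W1 hR])
        fix \<theta> :: real assume t: "\<theta> \<in> {0..1}"
        show "wR \<theta> * f \<theta> * (\<theta> - q') \<le> W \<theta> * f \<theta> * (\<theta> - q')"
        proof (cases "\<theta> \<le> th")
          case True
          have "max g \<theta> < sale I S q'" using True gE sq e by simp
          then show ?thesis using True by (simp add: W_def wR_def wG_def)
        next
          case False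
          have nn: "0 \<le> W \<theta> * f \<theta> * (\<theta> - q')"
            using False t f_nn wG1 e by (auto simp: W_def q'_def indicator_def)
          then show ?thesis using False by (simp add: wR_def)
        qed
      qed
      moreover have "profit f W q' \<le> 0" using E4 by (simp add: W_def)
      ultimately show ?thesis by (simp add: q'_def algebra_simps)
    qed
    have GtE: "Gt = (th - S) * G"
    proof (rule ccontr)
      assume "Gt \<noteq> (th - S) * G"
      then have gt: "Gt > (th - S) * G" using qgG qgE by simp
      define e where "e = min (S/2) ((Gt - (th - S) * G) / (2 * G))"
      have e0: "0 < e" "e < S" using gt Gpos S_pos by (auto simp: e_def)
      have "e * G \<le> (Gt - (th - S) * G) / 2"
      proof -
        have "e \<le> (Gt - (th - S) * G) / (2 * G)" by (simp add: e_def)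
        then have "e * (2 * G) \<le> Gt - (th - S) * G" using Gpos by (simp add: le_divide_eq)
        then show ?thesis by simp
      qed
      then show False using Gup[OF e0] gt by (simp add: algebra_simps)
    qed
    have qnM: "qn * M \<le> Mt" using E5 PM by simp
    then have "qn * M < th * M" using strictM[OF Mpos] by simp
    then have qnth: "qn < th" using Mpos by simp
    then have qnI: "I \<le> qn" using nth unfolding n_def by (auto simp: sale_def split: if_splits)
    then have nE: "n = qn + S" unfolding n_def by (simp add: sale_def)
    have Mup: "Mt \<le> (qn + e) * M" if e: "0 < e" "e < S" for e
    proof -
      define q' where "q' = qn + e"
      have q'I: "I \<le> q'" using qnI e by (simp add: q'_def)
      have sq: "sale I S q' = n + e" using q'I nE by (simp add: sale_def q'_def)
      define W where "W = (\<lambda>\<theta>. (1 - wG \<theta>) * indicator {\<theta>. max n \<theta> < sale I S q'} \<theta>)"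
      have Wm: "W \<in> borel_measurable borel" unfolding W_def
        by (intro borel_measurable_times borel_measurable_diff wGm ind_lt continuous_intros) auto
      have W1: "\<forall>x\<in>{0..1}. \<bar>W x\<bar> \<le> 1" using wG1 by (auto simp: W_def indicator_def)
      have "Mt - q' * M \<le> profit f W q'"
      proof (rule cmp[OF Wm W1 hM])
        fix \<theta> :: real assume t: "\<theta> \<in> {0..1}"
        show "wM \<theta> * f \<theta> * (\<theta> - q') \<le> W \<theta> * f \<theta> * (\<theta> - q')"
        proof (cases "\<theta> \<le> th")
          case True
          have "max n \<theta> < sale I S q'" using True nth sq e by simp
          then show ?thesis using True by (simp add: W_def wM_def wG_def)
        next
          case False
          have wM0: "wM \<theta> = 0" using False by (simp add: wM_def)
          show ?thesis
          proof (cases "\<theta> \<le> thg")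
            case True
            then show ?thesis using False wM0 by (simp add: W_def wG_def)
          next
            case False
            have "\<theta> - q' \<ge> 0" using False thgP nP nE e by (simp add: q'_def)
            then have nn: "0 \<le> W \<theta> * f \<theta> * (\<theta> - q')"
              using False t f_nn wG1 by (auto simp: W_def indicator_def)
            then show ?thesis using wM0 by simp
          qed
        qed
      qed
      moreover have "profit f W q' \<le> 0" using E6 by (simp add: W_def)
      ultimately show ?thesis by (simp add: q'_def algebra_simps)
    qed
    have MtE: "Mt = qn * M"
    proof (rule ccontr)
      assume "Mt \<noteq> qn * M"
      then have gt: "Mt > qn * M" using qnM by simp
      define e where "e = min (S/2) ((Mt - qn * M) / (2 * M))"
      have e0: "0 < e" "e < S" using gt Mpos S_pos by (auto simp: e_def)
      have "e * M \<le> (Mt - qn * M) / 2"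
      proof -
        have "e \<le> (Mt - qn * M) / (2 * M)" by (simp add: e_def)
        then have "e * (2 * M) \<le> Mt - qn * M" using Mpos by (simp add: le_divide_eq)
        then show ?thesis by simp
      qed
      then show False using Mup[OF e0] gt by (simp add: algebra_simps)
    qed
    have p1I: "I \<le> p1"
    proof (rule ccontr)
      assume "\<not> I \<le> p1"
      then have "a = p1" by (simp add: a_def sale_def)
      then show False using anE PS nE \<open>\<not> I \<le> p1\<close> pgI qnth by simp
    qed
    have p1E: "p1 = pg + th - qn - S" using anE PS nE p1I by (simp add: a_def sale_def)
    have p1qn: "p1 \<le> qn" using E1 PM MtE Mpos by (simp add: algebra_simps)
    have GMpos: "G + M > 0" using Gpos Mpos by simp
    have Tup: "Gt + Mt \<le> (p1 + e) * (G + M)" if e: "0 < e" "e < th - qn" for e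
    proof -
      define p' where "p' = p1 + e"
      have p'I: "I \<le> p'" using p1I e by (simp add: p'_def)
      have sp: "sale I S p' = a + e" using p'I p1I by (simp add: sale_def p'_def a_def)
      have p'th: "p' < th" using p1qn e by (simp add: p'_def)
      define W where "W = (\<lambda>\<theta>. indicator {\<theta>. V \<theta> < sale I S p' + max n \<theta>} \<theta> :: real)"
      have Wm: "W \<in> borel_measurable borel" unfolding W_def V_def
        by (intro ind_lt continuous_intros)
      have W1: "\<forall>x\<in>{0..1}. \<bar>W x\<bar> \<le> 1" by (auto simp: W_def indicator_def)
      have lfi: "((\<lambda>\<theta>. wR \<theta> * f \<theta> * (\<theta> - p') + wM \<theta> * f \<theta> * (\<theta> - p'))
                  has_integral ((Gt - p' * G) + (Mt - p' * M))) {0..1}"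
        by (intro has_integral_add hR hM)
      have "(Gt - p' * G) + (Mt - p' * M) \<le> profit f W p'"
      proof (rule cmp[OF Wm W1 lfi])
        fix \<theta> :: real assume t: "\<theta> \<in> {0..1}"
        show "wR \<theta> * f \<theta> * (\<theta> - p') + wM \<theta> * f \<theta> * (\<theta> - p') \<le> W \<theta> * f \<theta> * (\<theta> - p')"
        proof (cases "\<theta> \<le> th")
          case True
          have "V \<theta> < sale I S p' + max n \<theta>" using VE[OF t True] anE sp e by simp
          then have "W \<theta> = 1" by (simp add: W_def)
          then show ?thesis using True by (simp add: wR_def wM_def algebra_simps)
        next
          case False
          have "0 \<le> W \<theta> * f \<theta> * (\<theta> - p')" using False p'th t f_nn by (auto simp: W_def indicator_def)
          then show ?thesis using False by (simp add: wR_def wM_def)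
        qed
      qed
      moreover have "profit f W p' \<le> 0" using E2 by (simp add: W_def)
      ultimately show ?thesis by (simp add: p'_def algebra_simps)
    qed
    have TE: "Gt + Mt \<le> p1 * (G + M)"
    proof (rule ccontr)
      assume "\<not> Gt + Mt \<le> p1 * (G + M)"
      then have gt: "Gt + Mt > p1 * (G + M)" by simp
      define e where "e = min ((th - qn) / 2) ((Gt + Mt - p1 * (G + M)) / (2 * (G + M)))"
      have e00: "0 < e" using gt GMpos qnth by (auto simp: e_def)
      have "e \<le> (th - qn) / 2" unfolding e_def by (rule min.cobounded1)
      then have e0: "0 < e" "e < th - qn" using e00 qnth by auto
      have "e \<le> (Gt + Mt - p1 * (G + M)) / (2 * (G + M))" unfolding e_def by (rule min.cobounded2)
      then have "e * (2 * (G + M)) \<le> Gt + Mt - p1 * (G + M)" using GMpos by (simp add: le_divide_eq)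
      then show False using Tup[OF e0] gt by (simp add: algebra_simps)
    qed
    have A: "th - S \<le> qn"
    proof -
      have "(th - S) * G + qn * M \<le> qn * (G + M)"
        using TE GtE MtE p1qn GMpos by (smt (verit) mult_right_mono)
      then have "(th - S) * G \<le> qn * G" by (simp add: algebra_simps)
      then show ?thesis using Gpos by simp
    qed
    have B: "th - S < qn"
    proof (rule ccontr)
      assume "\<not> th - S < qn"
      then have eqq: "qn = th - S" using A by simp
      have "Gt + Mt = qn * (G + M)" unfolding GtE MtE eqq[symmetric] by (simp add: algebra_simps)
      then have "qn * (G + M) \<le> p1 * (G + M)" using TE by simp
      then have "qn \<le> p1" using GMpos by simp
      then have pgE: "pg = th - S" using p1qn p1E eqq by simp
      have "cexp f 0 th = th - S" unfolding cexp_th GtE MtE eqq using GMpos by (simp add: field_simps)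
      moreover have "th \<in> {0<..<1}" using basic ththg thg1 by simp
      ultimately have "th = \<theta>0" using th0_unique by simp
      then show False using pgE pg p0S by simp
    qed
    have C: "qn < pg"
    proof -
      have "qn \<le> pg" using nP nE PS by simp
      moreover have "qn \<noteq> pg"
      proof
        assume "qn = pg"
        then have "p1 = th - S" using p1E by simp
        then have "(th - S) * G + qn * M \<le> (th - S) * (G + M)" using TE GtE MtE by simp
        then have "qn * M \<le> (th - S) * M" by (simp add: algebra_simps)
        then show False using B Mpos by simp
      qed
      ultimately show ?thesis by simp
    qed
    have D: "cexp f 0 th > th - S"
    proof -
      have "(th - S) * M < qn * M" using B Mpos by simp
      then have "(th - S) * (G + M) < (th - S) * G + qn * M" by (simp add: algebra_simps)
      then show ?thesis unfolding cexp_th GtE MtE using GMpos by (simp add: field_simps)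
    qed
    have E: "th < \<theta>0"
    proof (rule ccontr)
      assume "\<not> th < \<theta>0"
      then consider "th = \<theta>0" | "\<theta>0 < th" by linarith
      then show False
      proof cases
        case 1 then show False using D th0 by simp
      next
        case 2
        have "cexp f 0 th - cexp f 0 \<theta>0 < th - \<theta>0"
          by (rule psi_mono[OF f_int f_pos f_lc m0 mlow th0(1) 2 th1])
        then show False using D th0(3) by simp
      qed
    qed
    have F: "pg < 2 * \<theta>0 - cexp f 0 \<theta>0"
    proof -
      have "pg \<le> 2 * qn - th + S" using p1E p1qn by simp
      also have "\<dots> < th + S" using qnth by simp
      also have "\<dots> < \<theta>0 + S" using E by simp
      finally show ?thesis using th0(3) by simp
    qed
    have ag: "avg_gov f th sig = th - S" using avgG GtE Gpos by simp
    have am: "avg_mkt f th sig = qn" using avgM MtE Mpos by simp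
    show ?thesis using ag am B C E F thgP PS th0P by simp




  qed

qed
end
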